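(* Let $f\in L_1([-\pi,\pi])$ have Fourier series $\sum_{k\in\mathbb Z}a_ke^{ikx}$, and for $N\in\mathbb N$ let $S_N(f)(x)=\sum_{m=-2^N}^{2^N}a_me^{imx}$. Then for every $1<p<\infty$ and every $N\in\mathbb N$, $$I_p(S_N(f))\le 2^{1/p'}I_p(f).$$
   Context: $p'=p/(p-1)$. For a function $g\in L_1([-\pi,\pi])$ with Fourier coefficients $\{c_k\}_{k\in\mathbb Z}$ (where $c_k=\frac1{2\pi}\int_{-\pi}^\pi g(x)e^{-ikx}dx$; for a trigonometric polynomial these are its coefficients), put $|\Delta c_k|=|c_k-c_{k+1}|$ for $k>0$, $|\Delta c_k|=|c_k-c_{k-1}|$ for $k<0$, $|\Delta c_0|=|c_0-c_1|+|c_0-c_{-1}|$; let $\Theta_k(g)=\sum_{[2^{k-1}]\le|m|<2^k}|\Delta c_m|$ for $k\ge0$ ($[\cdot]$ the floor function), and $I_p(g)=\big(\sum_{k=0}^\infty(2^{k/p'}\Theta_k(g))^p\big)^{1/p}$ (possibly $+\infty$). *)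

theory Defs
  imports "HOL-Analysis.Analysis"
begin

definition fourier_coeff :: "(real \<Rightarrow> complex) \<Rightarrow> int \<Rightarrow> complex" where
  "fourier_coeff g k =
     complex_of_real (1 / (2 * pi)) *
     set_lebesgue_integral lborel {-pi..pi}
       (\<lambda>x. g x * exp (- (\<i> * of_int k * complex_of_real x)))"

definition delta_abs :: "(int \<Rightarrow> complex) \<Rightarrow> int \<Rightarrow> real" where
  "delta_abs c k =
     (if k > 0 then cmod (c k - c (k + 1))
      else if k < 0 then cmod (c k - c (k - 1))
      else cmod (c 0 - c 1) + cmod (c 0 - c (-1)))"

definition Theta :: "(int \<Rightarrow> complex) \<Rightarrow> nat \<Rightarrow> real" where
  "Theta c k = (\<Sum>m\<in>{m::int. \<lfloor>(2::real) powr (real k - 1)\<rfloor> \<le> \<bar>m\<bar> \<and> \<bar>m\<bar> < 2 ^ k}.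
                  delta_abs c m)"

definition conj_exp :: "real \<Rightarrow> real" where
  "conj_exp p = p / (p - 1)"

definition Ip_seq :: "real \<Rightarrow> (int \<Rightarrow> complex) \<Rightarrow> ereal" where
  "Ip_seq p c =
     (let t = (\<lambda>k::nat. (2 powr (real k / conj_exp p) * Theta c k) powr p)
      in if summable t then ereal ((\<Sum>k. t k) powr (1 / p)) else \<infinity>)"

definition Ip :: "real \<Rightarrow> (real \<Rightarrow> complex) \<Rightarrow> ereal" where
  "Ip p g = Ip_seq p (fourier_coeff g)"

definition S_N :: "nat \<Rightarrow> (real \<Rightarrow> complex) \<Rightarrow> real \<Rightarrow> complex" where
  "S_N N f x = (\<Sum>m\<in>{-(2 ^ N)..(2 ^ N)::int}.
                  fourier_coeff f m * exp (\<i> * of_int m * complex_of_real x))"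

end

theory Submission
  imports Defs
begin

lemma exp_int_integral:
  fixes n :: int
  shows "set_lebesgue_integral lborel {-pi..pi} (\<lambda>x. exp (\<i> * of_int n * complex_of_real x))
         = (if n = 0 then complex_of_real (2*pi) else 0)"
proof (cases "n = 0")
  case True
  then show ?thesis
    by (simp add: set_lebesgue_integral_def scaleR_conv_of_real)
next
  case False
  define a where "a = \<i> * complex_of_int n"
  have a0: "a \<noteq> 0" using False by (simp add: a_def)
  let ?F = "\<lambda>x::real. exp (a * complex_of_real x) / a"
  have "set_lebesgue_integral lborel {-pi..pi} (\<lambda>x. exp (a * complex_of_real x)) = ?F pi - ?F (-pi)"
    unfolding set_lebesgue_integral_def
  proof (rule integral_FTC_atLeastAtMost)
    show "continuous_on {- pi..pi} (\<lambda>x. exp (a * complex_of_real x))"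
      by (intro continuous_intros)
    fix x :: real
    show "(?F has_vector_derivative exp (a * complex_of_real x)) (at x within {- pi..pi})"
      using a0
      by (intro derivative_eq_intros has_complex_derivative_imp_has_vector_derivative [unfolded o_def] | simp)+
  qed simp
  also have "?F pi = ?F (-pi)"
  proof -
    have "exp (a * complex_of_real pi) = exp (a * complex_of_real (-pi)) * exp ((2 * of_int n * pi) * \<i>)"
    proof -
      have "a * complex_of_real pi = a * complex_of_real (-pi) + (2 * of_int n * pi) * \<i>"
        by (simp add: a_def algebra_simps)
      then show ?thesis by (simp only: exp_add)
    qed
    also have "exp ((2 * of_int n * pi) * \<i>) = 1"
      by (rule exp_integer_2pi) simp
    finally show ?thesis by simp
  qed
  finally show ?thesis using False by (simp add: a_def)
qed

lemma set_integral_sum_fin: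
  fixes f :: "'i \<Rightarrow> 'a \<Rightarrow> 'b::{banach, second_countable_topology}"
  assumes "\<And>i. i \<in> I \<Longrightarrow> set_integrable M A (f i)"
  shows "(LINT x:A|M. (\<Sum>i\<in>I. f i x)) = (\<Sum>i\<in>I. LINT x:A|M. f i x)"
  unfolding set_lebesgue_integral_def scaleR_sum_right
  by (intro Bochner_Integration.integral_sum) (use assms in \<open>auto simp: set_integrable_def\<close>)

lemma fc_SN:
  "fourier_coeff (S_N N f) k = (if \<bar>k\<bar> \<le> 2 ^ N then fourier_coeff f k else 0)"
proof -
  define c where "c = fourier_coeff f"
  let ?I = "{-(2 ^ N)..(2 ^ N)::int}"
  have eq: "S_N N f x * exp (- (\<i> * of_int k * complex_of_real x)) =
      (\<Sum>m\<in>?I. c m * exp (\<i> * of_int (m - k) * complex_of_real x))" for x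
    unfolding S_N_def c_def sum_distrib_right
    by (rule sum.cong) (auto simp: mult.assoc exp_add[symmetric] algebra_simps)
  have "set_lebesgue_integral lborel {-pi..pi} (\<lambda>x. S_N N f x * exp (- (\<i> * of_int k * complex_of_real x)))
     = (\<Sum>m\<in>?I. c m * set_lebesgue_integral lborel {-pi..pi} (\<lambda>x. exp (\<i> * of_int (m - k) * complex_of_real x)))"
    unfolding eq
    by (subst set_integral_sum_fin)
       (auto intro!: borel_integrable_atLeastAtMost' continuous_intros)
  also have "\<dots> = (\<Sum>m\<in>?I. if m = k then c m * complex_of_real (2*pi) else 0)"
    by (rule sum.cong[OF refl], subst exp_int_integral, simp)
  also have "\<dots> = (if k \<in> ?I then c k * complex_of_real (2*pi) else 0)"
    by (subst sum.delta) auto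
  finally show ?thesis
    unfolding fourier_coeff_def[of "S_N N f"] c_def[symmetric]
    by (auto simp: abs_le_iff)
qed

lemma si_mult_bdd:
  fixes f g :: "real \<Rightarrow> complex"
  assumes f: "set_integrable lborel A f" and g: "g \<in> borel_measurable lborel"
    and gb: "\<And>x. norm (g x) \<le> 1"
  shows "set_integrable lborel A (\<lambda>x. f x * g x)"
  unfolding set_integrable_def
proof (rule Bochner_Integration.integrable_bound[where f="\<lambda>x. indicator A x *\<^sub>R f x"])
  show "integrable lborel (\<lambda>x. indicator A x *\<^sub>R f x)"
    using f unfolding set_integrable_def .
  have "(\<lambda>x. (indicator A x *\<^sub>R f x) * g x) \<in> borel_measurable lborel"
    using borel_measurable_integrable[OF f[unfolded set_integrable_def]] g by measurable
  then show "(\<lambda>x. indicator A x *\<^sub>R (f x * g x)) \<in> borel_measurable lborel"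
    by (simp add: mult.assoc)
  show "AE x in lborel. norm (indicator A x *\<^sub>R (f x * g x)) \<le> norm (indicator A x *\<^sub>R f x)"
    using gb by (auto simp: norm_mult indicator_def intro!: mult_left_le)
qed

lemma exp_meas: "(\<lambda>x::real. exp (c * complex_of_real x)) \<in> borel_measurable lborel"
  by measurable

lemma exp_ne_1:
  fixes x :: real and s :: int
  assumes "x \<in> {-pi..pi}" "x \<noteq> 0" "s = 1 \<or> s = -1"
  shows "exp (- (\<i> * of_int s * complex_of_real x)) \<noteq> 1"
proof
  assume "exp (- (\<i> * of_int s * complex_of_real x)) = 1"
  then obtain n :: int where n: "- (real_of_int s * x) = of_int (2 * n) * pi"
    by (auto simp: exp_eq_1)
  have ax: "\<bar>real_of_int s * x\<bar> = \<bar>x\<bar>" using assms(3) by auto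
  have "\<bar>x\<bar> \<le> pi" using assms(1) by auto
  hence "\<bar>of_int (2 * n) * pi\<bar> \<le> pi" using n ax by (metis abs_minus_cancel)
  hence "\<bar>real_of_int (2*n)\<bar> * pi \<le> 1 * pi" by (simp add: abs_mult)
  hence "\<bar>real_of_int (2*n)\<bar> \<le> 1" using pi_gt_zero by (meson mult_le_cancel_right_pos)
  hence "n = 0" by linarith
  with n have "real_of_int s * x = 0" by simp
  with assms(2,3) show False by auto
qed

lemma ker_bound:
  fixes x :: real and s :: int and M :: nat
  shows "norm ((\<Sum>j<M. exp (- (\<i> * of_int (s * int (M + j)) * complex_of_real x))) / of_nat M) \<le> 1"
proof (cases "M = 0")
  case False
  have "norm (\<Sum>j<M. exp (- (\<i> * of_int (s * int (M + j)) * complex_of_real x))) \<le> (\<Sum>j<M. 1)"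
    by (rule order_trans[OF norm_sum]) simp
  then show ?thesis using False by (simp add: norm_divide)
qed simp

lemma ker_lim:
  fixes x :: real and s :: int
  assumes "x \<in> {-pi..pi}" "x \<noteq> 0" "s = 1 \<or> s = -1"
  shows "(\<lambda>K. (\<Sum>j<(2::nat)^K. exp (- (\<i> * of_int (s * int (2^K + j)) * complex_of_real x))) / of_nat (2^K)) \<longlonglongrightarrow> 0"
proof -
  define z where "z = exp (- (\<i> * of_int s * complex_of_real x))"
  have z1: "z \<noteq> 1" unfolding z_def by (rule exp_ne_1[OF assms])
  have nz: "norm z = 1" by (simp add: z_def)
  have e: "exp (- (\<i> * of_int (s * int (M + j)) * complex_of_real x)) = z ^ (M + j)" for M j :: nat
  proof -
    have "- (\<i> * of_int (s * int (M + j)) * complex_of_real x) = of_nat (M + j) * (- (\<i> * of_int s * complex_of_real x))"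
      by (simp add: algebra_simps)
    then show ?thesis unfolding z_def by (simp only: exp_of_nat_mult)
  qed
  define C where "C = 2 / norm (1 - z)"
  have bnd: "norm ((\<Sum>j<(2::nat)^K. exp (- (\<i> * of_int (s * int (2^K + j)) * complex_of_real x))) / of_nat (2^K)) \<le> C * (1/2)^K" for K
  proof -
    let ?M = "(2::nat)^K"
    have "(\<Sum>j<?M. exp (- (\<i> * of_int (s * int (?M + j)) * complex_of_real x))) = z ^ ?M * (\<Sum>j<?M. z ^ j)"
      by (simp only: e power_add sum_distrib_left)
    also have "\<dots> = z ^ ?M * ((1 - z ^ ?M) / (1 - z))"
      using z1 by (simp add: sum_gp_strict)
    finally have eq: "(\<Sum>j<?M. exp (- (\<i> * of_int (s * int (?M + j)) * complex_of_real x))) = z ^ ?M * ((1 - z ^ ?M) / (1 - z))" .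
    have "norm (1 - z ^ ?M) \<le> 2"
      using norm_triangle_ineq4[of 1 "z ^ ?M"] by (simp add: norm_power nz)
    hence "norm (z ^ ?M * ((1 - z ^ ?M) / (1 - z))) \<le> C"
      using z1 by (simp add: norm_mult norm_power nz norm_divide C_def divide_right_mono)
    hence "norm (z ^ ?M * ((1 - z ^ ?M) / (1 - z))) / 2^K \<le> C / 2^K"
      by (simp add: divide_right_mono)
    then show ?thesis unfolding eq by (simp add: norm_divide norm_mult norm_power power_divide)
  qed
  show ?thesis
  proof (rule Lim_null_comparison)
    show "\<forall>\<^sub>F K in sequentially. norm ((\<Sum>j<(2::nat)^K. exp (- (\<i> * of_int (s * int (2^K + j)) * complex_of_real x))) / of_nat (2^K)) \<le> C * (1/2)^K"
      using bnd by simp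
    show "(\<lambda>K. C * (1/2::real)^K) \<longlonglongrightarrow> 0"
      by (intro tendsto_mult_right_zero LIMSEQ_power_zero) simp
  qed
qed

lemma RL_avg:
  fixes f :: "real \<Rightarrow> complex" and s :: int
  assumes f: "set_integrable lborel {-pi..pi} f" and s: "s = 1 \<or> s = -1"
  shows "(\<lambda>K. (\<Sum>j<(2::nat)^K. fourier_coeff f (s * int (2^K + j))) / of_nat (2^K)) \<longlonglongrightarrow> 0"
proof -
  define A where "A = {-pi..pi}"
  define ker where "ker K x = (\<Sum>j<(2::nat)^K. exp (- (\<i> * of_int (s * int (2^K + j)) * complex_of_real x))) / of_nat (2^K)" for K x
  have kb: "norm (ker K x) \<le> 1" for K x unfolding ker_def by (rule ker_bound)
  have km: "ker K \<in> borel_measurable lborel" for K unfolding ker_def by measurable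
  have fA: "set_integrable lborel A f" using f by (simp add: A_def)
  have avg: "(\<Sum>j<(2::nat)^K. fourier_coeff f (s * int (2^K + j))) / of_nat (2^K)
       = complex_of_real (1 / (2 * pi)) * (LINT x:A|lborel. f x * ker K x)" for K
  proof -
    have "(LINT x:A|lborel. f x * ker K x) = (LINT x:A|lborel. (\<Sum>j<(2::nat)^K. f x * exp (- (\<i> * of_int (s * int (2^K + j)) * complex_of_real x))) / of_nat (2^K))"
      unfolding ker_def by (simp add: sum_distrib_left)
    also have "\<dots> = (\<Sum>j<(2::nat)^K. LINT x:A|lborel. f x * exp (- (\<i> * of_int (s * int (2^K + j)) * complex_of_real x))) / of_nat (2^K)"
      by (subst set_integral_divide_zero, subst set_integral_sum_fin)
         (auto intro!: si_mult_bdd[OF fA] exp_meas)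
    finally show ?thesis
      unfolding fourier_coeff_def A_def
      by (simp add: sum_divide_distrib[symmetric] field_simps)
  qed
  have "(\<lambda>K. integral\<^sup>L lborel (\<lambda>x. indicator A x *\<^sub>R (f x * ker K x))) \<longlonglongrightarrow> integral\<^sup>L lborel (\<lambda>x::real. 0::complex)"
  proof (rule Bochner_Integration.integral_dominated_convergence[where M="lborel::real measure" and s="\<lambda>K x. indicator A x *\<^sub>R (f x * ker K x)" and f="\<lambda>x. 0" and w="\<lambda>x. norm (indicator A x *\<^sub>R f x)"])
    show "(\<lambda>x. 0::complex) \<in> borel_measurable lborel" by simp
    show "(\<lambda>x. indicator A x *\<^sub>R (f x * ker K x)) \<in> borel_measurable lborel" for K
      using si_mult_bdd[OF fA km kb] unfolding set_integrable_def by (rule borel_measurable_integrable)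
    show "integrable lborel (\<lambda>x. norm (indicator A x *\<^sub>R f x))"
      using fA unfolding set_integrable_def by (rule integrable_norm)
    show "AE x in lborel. norm (indicator A x *\<^sub>R (f x * ker K x)) \<le> norm (indicator A x *\<^sub>R f x)" for K
      using kb[of K] by (auto simp: norm_mult indicator_def intro!: mult_left_le)
    show "AE x in lborel. (\<lambda>K. indicator A x *\<^sub>R (f x * ker K x)) \<longlonglongrightarrow> 0"
      using AE_lborel_singleton[of 0]
    proof eventually_elim
      case (elim x)
      show ?case
      proof (cases "x \<in> A")
        case True
        have "(\<lambda>K. ker K x) \<longlonglongrightarrow> 0" unfolding ker_def
          using True elim s by (intro ker_lim) (auto simp: A_def)
        then have "(\<lambda>K. f x * ker K x) \<longlonglongrightarrow> f x * 0" by (intro tendsto_mult tendsto_const)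
        then show ?thesis using True by simp
      qed simp
    qed
  qed
  then have "(\<lambda>K. LINT x:A|lborel. f x * ker K x) \<longlonglongrightarrow> 0"
    by (simp add: set_lebesgue_integral_def)
  then have "(\<lambda>K. complex_of_real (1 / (2 * pi)) * (LINT x:A|lborel. f x * ker K x)) \<longlonglongrightarrow> complex_of_real (1 / (2 * pi)) * 0"
    by (intro tendsto_mult tendsto_const)
  then show ?thesis unfolding avg by simp
qed



lemma half_conv: fixes x y p :: real assumes "x > 0" "y > 0" "1 \<le> p"
shows "((x + y) / 2) powr p \<le> (x powr p + y powr p) / 2"
proof -
  have "(\<lambda>z::real. z powr p) ((1 - 1/2) *\<^sub>R x + (1/2) *\<^sub>R y) \<le> (1 - 1/2) * (\<lambda>z::real. z powr p) x + (1/2) * (\<lambda>z::real. z powr p) y"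
    by (rule convex_onD[OF powr_convex[OF assms(3)]]) (use assms in auto)
  then show ?thesis by (simp add: add_divide_distrib)
qed

lemma two_pt:
  fixes x y p :: real
  assumes x: "0 \<le> x" and y: "0 \<le> y" and p: "1 \<le> p"
  shows "(x + y) powr p \<le> 2 powr (p - 1) * (x powr p + y powr p)"
proof -
  have r1: "1 \<le> 2 powr (p - 1)" using p by (simp add: ge_one_powr_ge_zero)
  show ?thesis
  proof (cases "x = 0 \<or> y = 0")
    case True
    then show ?thesis
    proof
      assume "x = 0"
      then show ?thesis using r1 p y by (simp add: mult_le_cancel_right1)
    next
      assume "y = 0"
      then show ?thesis using r1 p x by (simp add: mult_le_cancel_right1)
    qed
  next
    case False
    hence xp: "x > 0" and yp: "y > 0" using x y by auto
    have h: "((x + y) / 2) powr p \<le> (x powr p + y powr p) / 2"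
      using half_conv[OF xp yp p] .
    have eq2: "2 * ((x + y) / 2) = x + y" by simp
    have "(x + y) powr p = (2 * ((x + y) / 2)) powr p" by (simp only: eq2)
    also have "\<dots> = 2 powr p * ((x + y) / 2) powr p"
      by (rule powr_mult)
    also have "\<dots> \<le> 2 powr p * ((x powr p + y powr p) / 2)"
      using h by (simp add: mult_left_mono)
    also have "\<dots> = 2 powr (p - 1) * (x powr p + y powr p)"
      by (simp add: powr_diff)
    finally show ?thesis .
  qed
qed

lemma conv_sum:
  fixes u :: "nat \<Rightarrow> real" and p :: real
  assumes u: "\<And>j. 0 \<le> u j" and p: "1 \<le> p"
  shows "(\<Sum>j<M. u j) powr p \<le> (\<Sum>j<M. (2 powr (p - 1)) ^ (j + 1) * u j powr p)"
  using u
proof (induction M arbitrary: u)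
  case 0
  then show ?case using p by simp
next
  case (Suc M)
  define r where "r = 2 powr (p - 1)"
  have r0: "0 \<le> r" by (simp add: r_def)
  have "(\<Sum>j<Suc M. u j) = u 0 + (\<Sum>j<M. u (Suc j))"
    by (rule sum.lessThan_Suc_shift)
  hence "(\<Sum>j<Suc M. u j) powr p \<le> r * (u 0 powr p + (\<Sum>j<M. u (Suc j)) powr p)"
    unfolding r_def using Suc.prems p by (simp add: two_pt sum_nonneg)
  also have "\<dots> \<le> r * (u 0 powr p + (\<Sum>j<M. r ^ (j + 1) * u (Suc j) powr p))"
    using Suc.IH[of "\<lambda>j. u (Suc j)"] Suc.prems r0 unfolding r_def
    by (intro mult_left_mono add_left_mono) auto
  also have "\<dots> = (\<Sum>j<Suc M. r ^ (j + 1) * u j powr p)"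
    unfolding sum.lessThan_Suc_shift by (simp add: sum_distrib_left algebra_simps)
  finally show ?case unfolding r_def .
qed

lemma telesc:
  fixes c :: "nat \<Rightarrow> 'a::real_normed_vector"
  assumes "m \<le> n"
  shows "norm (c m - c n) \<le> (\<Sum>i\<in>{m..<n}. norm (c i - c (Suc i)))"
proof -
  have "c m - c n = - (\<Sum>i\<in>{m..<n}. c (Suc i) - c i)"
    using assms by (simp add: sum_Suc_diff')
  also have "\<dots> = (\<Sum>i\<in>{m..<n}. c i - c (Suc i))"
    by (simp add: sum_negf[symmetric])
  finally show ?thesis by (metis norm_sum)
qed

lemma floor_pow:
  "\<lfloor>(2::real) powr (real k - 1)\<rfloor> = (if k = 0 then 0 else 2 ^ (k - 1))"
proof (cases k)
  case 0 then show ?thesis by simp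
next
  case (Suc j)
  have "(2::real) powr (real k - 1) = 2 ^ j"
    using Suc by (simp add: powr_realpow)
  then show ?thesis using Suc by simp
qed

lemma delta_nonneg: "0 \<le> delta_abs c m"
  by (simp add: delta_abs_def)

lemma Theta_alt: "Theta c k = (\<Sum>m\<in>{m::int. (if k = 0 then 0 else 2 ^ (k - 1)) \<le> \<bar>m\<bar> \<and> \<bar>m\<bar> < 2 ^ k}. delta_abs c m)"
  unfolding Theta_def floor_pow by simp

lemma fin_S: "finite {m::int. L \<le> \<bar>m\<bar> \<and> \<bar>m\<bar> < B}"
  by (rule finite_subset[of _ "{-B..B}"]) auto

lemma Theta_lower:
  "(\<Sum>i\<in>{2^k..<2^(Suc k)}. cmod (c (int i) - c (int (Suc i))))
   + (\<Sum>i\<in>{2^k..<2^(Suc k)}. cmod (c (- int i) - c (- int (Suc i)))) \<le> Theta c (Suc k)"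
proof -
  define S where "S = {m::int. 2 ^ k \<le> \<bar>m\<bar> \<and> \<bar>m\<bar> < 2 ^ Suc k}"
  define I where "I = {(2::nat)^k..<2^(Suc k)}"
  have Th: "Theta c (Suc k) = (\<Sum>m\<in>S. delta_abs c m)"
    unfolding Theta_alt S_def by simp
  have fS: "finite S" unfolding S_def by (rule fin_S)
  have I1: "i \<in> I \<Longrightarrow> 1 \<le> i" for i
    unfolding I_def using one_le_power[of "2::nat" k] by auto
  have e: "\<And>x::nat. - int x - 1 = - 1 - int x" by simp
  have I0: "0 \<notin> I" using I1 by force
  have sub: "int ` I \<union> (\<lambda>i. - int i) ` I \<subseteq> S"
  proof -
    have mem: "(2::int) ^ k \<le> int i \<and> int i < 2 ^ Suc k" if "i \<in> I" for i
    proof -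
      have "2 ^ k \<le> i" "i < 2 ^ Suc k" using that unfolding I_def by auto
      hence "int (2 ^ k) \<le> int i" "int i < int (2 ^ Suc k)" by linarith+
      thus ?thesis by simp
    qed
    have "int ` I \<subseteq> S" unfolding S_def using mem by auto
    moreover have "(\<lambda>i. - int i) ` I \<subseteq> S" unfolding S_def using mem by auto
    ultimately show ?thesis by blast
  qed
  have disj: "int ` I \<inter> (\<lambda>i. - int i) ` I = {}" using I1 by force
  have "(\<Sum>m\<in>int ` I \<union> (\<lambda>i. - int i) ` I. delta_abs c m) \<le> (\<Sum>m\<in>S. delta_abs c m)"
    by (rule sum_mono2[OF fS sub]) (simp add: delta_nonneg)
  also have "(\<Sum>m\<in>int ` I \<union> (\<lambda>i. - int i) ` I. delta_abs c m)
      = (\<Sum>m\<in>int ` I. delta_abs c m) + (\<Sum>m\<in>(\<lambda>i. - int i) ` I. delta_abs c m)"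
    by (rule sum.union_disjoint) (auto simp: I_def disj)
  also have "(\<Sum>m\<in>int ` I. delta_abs c m) = (\<Sum>i\<in>I. cmod (c (int i) - c (int (Suc i))))"
    using I0 by (subst sum.reindex) (auto simp: inj_on_def delta_abs_def add.commute intro!: sum.cong)
  also have "(\<Sum>m\<in>(\<lambda>i. - int i) ` I. delta_abs c m) = (\<Sum>i\<in>I. cmod (c (- int i) - c (- int (Suc i))))"
    using I0 by (subst sum.reindex) (auto simp: inj_on_def delta_abs_def intro!: sum.cong simp: e)
  finally show ?thesis unfolding Th I_def .
qed

lemma delta_b0:
  fixes a :: "int \<Rightarrow> complex" and P :: int
  assumes P: "1 \<le> P"
  shows "delta_abs (\<lambda>k. if \<bar>k\<bar> \<le> P then a k else 0) m =
    (if \<bar>m\<bar> < P then delta_abs a m else if \<bar>m\<bar> = P then cmod (a m) else 0)"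
proof -
  define b where "b = (\<lambda>k. if \<bar>k\<bar> \<le> P then a k else 0)"
  have bin: "\<bar>k\<bar> \<le> P \<Longrightarrow> b k = a k" for k by (simp add: b_def)
  have bout: "\<not> \<bar>k\<bar> \<le> P \<Longrightarrow> b k = 0" for k by (simp add: b_def)
  consider "m > 0" | "m < 0" | "m = 0" by linarith
  then have "delta_abs b m =
    (if \<bar>m\<bar> < P then delta_abs a m else if \<bar>m\<bar> = P then cmod (a m) else 0)"
  proof cases
    case 1
    hence d: "delta_abs b m = cmod (b m - b (m + 1))" "delta_abs a m = cmod (a m - a (m + 1))"
      by (simp_all add: delta_abs_def)
    consider "m < P" | "m = P" | "m > P" by linarith
    then show ?thesis
    proof cases
      case 1
      then show ?thesis unfolding d using \<open>m > 0\<close> by (simp add: bin)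
    next
      case 2
      then show ?thesis unfolding d using \<open>m > 0\<close> by (simp add: bin bout)
    next
      case 3
      then show ?thesis unfolding d using \<open>m > 0\<close> by (simp add: bout)
    qed
  next
    case 2
    hence d: "delta_abs b m = cmod (b m - b (m - 1))" "delta_abs a m = cmod (a m - a (m - 1))"
      by (simp_all add: delta_abs_def)
    consider "-m < P" | "-m = P" | "-m > P" by linarith
    then show ?thesis
    proof cases
      case 1
      then show ?thesis unfolding d using \<open>m < 0\<close> by (simp add: bin)
    next
      case 2
      then show ?thesis unfolding d using \<open>m < 0\<close> by (simp add: bin bout)
    next
      case 3
      then show ?thesis unfolding d using \<open>m < 0\<close> by (simp add: bout)
    qed
  next
    case 3
    then show ?thesis using P by (simp add: delta_abs_def bin)
  qed
  then show ?thesis by (simp only: b_def)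
qed

lemma delta_b:
  fixes a :: "int \<Rightarrow> complex"
  shows "delta_abs (\<lambda>k. if \<bar>k\<bar> \<le> 2 ^ N then a k else 0) m =
    (if \<bar>m\<bar> < 2 ^ N then delta_abs a m else if \<bar>m\<bar> = 2 ^ N then cmod (a m) else 0)"
  by (rule delta_b0) simp

lemma Theta_b_low:
  fixes a :: "int \<Rightarrow> complex"
  assumes "k \<le> N"
  shows "Theta (\<lambda>k. if \<bar>k\<bar> \<le> 2 ^ N then a k else 0) k = Theta a k"
proof -
  have kN: "(2::int) ^ k \<le> 2 ^ N" using assms by (simp add: power_increasing)
  have "delta_abs (\<lambda>k. if \<bar>k\<bar> \<le> 2 ^ N then a k else 0) x = delta_abs a x" if "\<bar>x\<bar> < 2 ^ k" for x
  proof -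
    have "\<bar>x\<bar> < 2 ^ N" using that kN by linarith
    then show ?thesis by (simp only: delta_b if_True)
  qed
  then show ?thesis
    unfolding Theta_alt by (intro sum.cong refl) auto
qed

lemma Theta_b_high:
  fixes a :: "int \<Rightarrow> complex"
  assumes "Suc (Suc N) \<le> k"
  shows "Theta (\<lambda>k. if \<bar>k\<bar> \<le> 2 ^ N then a k else 0) k = 0"
proof -
  have k0: "k \<noteq> 0" using assms by linarith
  have "N < k - 1" using assms by linarith
  hence lt: "(2::int) ^ N < 2 ^ (k - 1)" by (rule power_strict_increasing) simp
  have z: "delta_abs (\<lambda>k. if \<bar>k\<bar> \<le> 2 ^ N then a k else 0) x = 0" if "2 ^ (k - 1) \<le> \<bar>x\<bar>" for x
  proof -
    have "\<not> \<bar>x\<bar> < 2 ^ N" "\<bar>x\<bar> \<noteq> 2 ^ N" using that lt by linarith+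
    then show ?thesis by (simp only: delta_b if_False)
  qed
  show ?thesis
    unfolding Theta_alt
  proof (rule sum.neutral, rule ballI)
    fix x assume "x \<in> {m::int. (if k = 0 then 0 else 2 ^ (k - 1)) \<le> \<bar>m\<bar> \<and> \<bar>m\<bar> < 2 ^ k}"
    hence "2 ^ (k - 1) \<le> \<bar>x\<bar>" using k0 by simp
    then show "delta_abs (\<lambda>k. if \<bar>k\<bar> \<le> 2 ^ N then a k else 0) x = 0" by (rule z)
  qed
qed

lemma Theta_b_mid:
  fixes a :: "int \<Rightarrow> complex"
  shows "Theta (\<lambda>k. if \<bar>k\<bar> \<le> 2 ^ N then a k else 0) (Suc N) = cmod (a (2 ^ N)) + cmod (a (- (2 ^ N)))"
proof -
  define S where "S = {m::int. 2 ^ N \<le> \<bar>m\<bar> \<and> \<bar>m\<bar> < 2 ^ Suc N}"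
  define T where "T = {(2::int) ^ N, - (2 ^ N)}"
  have fS: "finite S" unfolding S_def by (rule fin_S)
  have TS: "T \<subseteq> S" unfolding T_def S_def by auto
  have "Theta (\<lambda>k. if \<bar>k\<bar> \<le> 2 ^ N then a k else 0) (Suc N) = (\<Sum>m\<in>S. delta_abs (\<lambda>k. if \<bar>k\<bar> \<le> 2 ^ N then a k else 0) m)"
    unfolding Theta_alt S_def by simp
  also have "\<dots> = (\<Sum>m\<in>S. if m \<in> T then cmod (a m) else 0)"
    unfolding T_def
  proof (rule sum.cong[OF refl])
    fix x :: int assume "x \<in> S"
    hence x: "2 ^ N \<le> \<bar>x\<bar>" by (simp add: S_def)
    show "delta_abs (\<lambda>k. if \<bar>k\<bar> \<le> 2 ^ N then a k else 0) x = (if x \<in> {2 ^ N, - (2 ^ N)} then cmod (a x) else 0)"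
    proof (cases "\<bar>x\<bar> = 2 ^ N")
      case True
      hence "x \<in> {2 ^ N, - (2 ^ N)}" by (auto simp: abs_if split: if_splits)
      with True show ?thesis by (simp only: delta_b if_True) simp
    next
      case False
      hence "x \<notin> {2 ^ N, - (2 ^ N)}" by auto
      with False x show ?thesis by (simp only: delta_b) simp
    qed
  qed
  also have "\<dots> = (\<Sum>m\<in>S \<inter> T. cmod (a m))"
    by (rule sum.inter_restrict[OF fS, symmetric])
  also have "S \<inter> T = T" using TS by blast
  also have "(\<Sum>m\<in>T. cmod (a m)) = cmod (a (2 ^ N)) + cmod (a (- (2 ^ N)))"
  proof -
    have "(2::int) ^ N \<noteq> - (2 ^ N)" by (smt (verit) zero_less_power)
    then show ?thesis unfolding T_def by simp
  qed
  finally show ?thesis .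
qed



lemma blocks:
  fixes g :: "nat \<Rightarrow> real"
  assumes "N \<le> K"
  shows "(\<Sum>i\<in>{2^N..<2^K}. g i) = (\<Sum>k\<in>{N..<K}. \<Sum>i\<in>{2^k..<2^Suc k}. g i)"
  using assms
proof (induction K rule: dec_induct)
  case base
  then show ?case by simp
next
  case (step K)
  have le1: "(2::nat)^N \<le> 2^K" using step.hyps(1) by (simp add: power_increasing)
  have le2: "(2::nat)^K \<le> 2^Suc K" by simp
  have "(\<Sum>i\<in>{2^N..<2^Suc K}. g i) = (\<Sum>i\<in>{2^N..<2^K}. g i) + (\<Sum>i\<in>{2^K..<2^Suc K}. g i)"
    by (rule sum.atLeastLessThan_concat[OF le1 le2, symmetric])
  also have "\<dots> = (\<Sum>k\<in>{N..<Suc K}. \<Sum>i\<in>{2^k..<2^Suc k}. g i)"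
    using step.IH step.hyps(1) by (simp add: sum.atLeastLessThan_Suc)
  finally show ?case .
qed

lemma chain:
  fixes c :: "nat \<Rightarrow> complex"
  assumes NK: "N \<le> K" and n1: "2^N \<le> n" and n2: "n \<le> 2^Suc K"
  shows "cmod (c (2^N) - c n) \<le> (\<Sum>k\<in>{N..<Suc K}. \<Sum>i\<in>{2^k..<2^Suc k}. cmod (c i - c (Suc i)))"
proof -
  have "cmod (c (2^N) - c n) \<le> (\<Sum>i\<in>{2^N..<n}. cmod (c i - c (Suc i)))"
    by (rule telesc[OF n1])
  also have "\<dots> \<le> (\<Sum>i\<in>{2^N..<2^Suc K}. cmod (c i - c (Suc i)))"
    by (rule sum_mono2) (use n2 in auto)
  also have "\<dots> = (\<Sum>k\<in>{N..<Suc K}. \<Sum>i\<in>{2^k..<2^Suc k}. cmod (c i - c (Suc i)))"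
    by (rule blocks) (use NK in simp)
  finally show ?thesis .
qed

lemma avg_bound:
  fixes c :: "nat \<Rightarrow> complex"
  assumes NK: "N \<le> K"
  shows "cmod (c (2^N)) \<le> (\<Sum>k\<in>{N..<Suc K}. \<Sum>i\<in>{2^k..<2^Suc k}. cmod (c i - c (Suc i)))
          + cmod ((\<Sum>j<(2::nat)^K. c (2^K + j)) / of_nat (2^K))"
proof -
  define M :: nat where "M = 2^K"
  define B where "B = (\<Sum>k\<in>{N..<Suc K}. \<Sum>i\<in>{2^k..<2^Suc k}. cmod (c i - c (Suc i)))"
  have M0: "M > 0" by (simp add: M_def)
  have NM: "(2::nat)^N \<le> M" unfolding M_def using NK by (simp add: power_increasing)
  have eq: "c (2^N) = (\<Sum>j<M. c (2^N) - c (M + j)) / of_nat M + (\<Sum>j<M. c (M + j)) / of_nat M"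
  proof -
    have "(\<Sum>j<M. c (2^N) - c (M + j)) + (\<Sum>j<M. c (M + j)) = of_nat M * c (2^N)"
      by (simp add: sum_subtractf)
    then show ?thesis using M0 by (simp add: add_divide_distrib[symmetric])
  qed
  have bj: "cmod (c (2^N) - c (M + j)) \<le> B" if "j < M" for j
  proof -
    have h1: "2^N \<le> M + j" using NM by linarith
    have h2: "M + j \<le> 2 ^ Suc K" using that by (simp add: M_def)
    show ?thesis unfolding B_def by (rule chain[OF NK h1 h2])
  qed
  have "cmod ((\<Sum>j<M. c (2^N) - c (M + j)) / of_nat M) \<le> (\<Sum>j<M. cmod (c (2^N) - c (M + j))) / of_nat M"
    by (simp add: norm_divide divide_right_mono norm_sum)
  also have "\<dots> \<le> (\<Sum>j<M. B) / of_nat M"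
    by (intro divide_right_mono sum_mono bj) auto
  also have "\<dots> = B" using M0 by simp
  finally have "cmod ((\<Sum>j<M. c (2^N) - c (M + j)) / of_nat M) \<le> B" .
  then have "cmod (c (2^N)) \<le> B + cmod ((\<Sum>j<M. c (M + j)) / of_nat M)"
    by (subst eq) (rule order_trans[OF norm_triangle_ineq], simp)
  then show ?thesis unfolding B_def M_def .
qed



lemma Theta_nonneg: "0 \<le> Theta c k"
  unfolding Theta_def by (rule sum_nonneg) (simp add: delta_nonneg)

lemma tform:
  fixes p x :: real
  assumes p: "1 < p" and x: "0 \<le> x"
  shows "(2 powr (real k / conj_exp p) * x) powr p = (2 powr (p - 1)) ^ k * x powr p"
proof -
  have "(2 powr (real k / conj_exp p) * x) powr p = (2 powr (real k / conj_exp p)) powr p * x powr p"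
    using x by (simp add: powr_mult)
  also have "(2 powr (real k / conj_exp p)) powr p = 2 powr ((p - 1) * real k)"
  proof -
    have "real k / conj_exp p * p = (p - 1) * real k"
      using p unfolding conj_exp_def by (simp add: field_simps)
    then show ?thesis by (simp add: powr_powr)
  qed
  also have "2 powr ((p - 1) * real k) = (2 powr (p - 1)) ^ k"
    by (simp add: powr_powr[symmetric] powr_realpow)
  finally show ?thesis .
qed

lemma key_bound:
  fixes f :: "real \<Rightarrow> complex" and p :: real and N :: nat
  assumes f: "set_integrable lborel {-pi..pi} f" and p: "1 < p"
    and summ: "summable (\<lambda>k. (2 powr (p - 1)) ^ k * Theta (fourier_coeff f) k powr p)"
  shows "(2 powr (p - 1)) ^ Suc N * (cmod (fourier_coeff f (2^N)) + cmod (fourier_coeff f (-(2^N)))) powr p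
     \<le> 2 powr (p - 1) * (\<Sum>j. (2 powr (p - 1)) ^ (j + Suc N) * Theta (fourier_coeff f) (j + Suc N) powr p)"
proof -
  define a where "a = fourier_coeff f"
  define r :: real where "r = 2 powr (p - 1)"
  have r0: "0 < r" by (simp add: r_def)
  define t where "t = (\<lambda>k. r ^ k * Theta a k powr p)"
  have t0: "0 \<le> t k" for k using r0 by (simp add: t_def)
  have summ': "summable (\<lambda>j. t (j + Suc N))"
    using summ unfolding t_def r_def a_def by (rule summable_ignore_initial_segment)
  define Tail where "Tail = (\<Sum>j. t (j + Suc N))"
  have Tail0: "0 \<le> Tail" unfolding Tail_def by (rule suminf_nonneg[OF summ']) (simp add: t0)
  define \<alpha> where "\<alpha> = cmod (a (2^N)) + cmod (a (-(2^N)))"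
  have \<alpha>0: "0 \<le> \<alpha>" by (simp add: \<alpha>_def)
  define c1 where "c1 = (\<lambda>i::nat. a (int i))"
  define c2 where "c2 = (\<lambda>i::nat. a (- int i))"
  define e where "e K = cmod ((\<Sum>j<(2::nat)^K. c1 (2^K + j)) / of_nat (2^K))
      + cmod ((\<Sum>j<(2::nat)^K. c2 (2^K + j)) / of_nat (2^K))" for K
  have e0: "e \<longlonglongrightarrow> 0"
  proof -
    have l1: "(\<lambda>K. (\<Sum>j<(2::nat)^K. fourier_coeff f (1 * int (2^K + j))) / of_nat (2^K)) \<longlonglongrightarrow> 0"
      by (rule RL_avg[OF f]) simp
    have l2: "(\<lambda>K. (\<Sum>j<(2::nat)^K. fourier_coeff f ((-1) * int (2^K + j))) / of_nat (2^K)) \<longlonglongrightarrow> 0"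
      by (rule RL_avg[OF f]) simp
    have "(\<lambda>K. cmod ((\<Sum>j<(2::nat)^K. c1 (2^K + j)) / of_nat (2^K))
      + cmod ((\<Sum>j<(2::nat)^K. c2 (2^K + j)) / of_nat (2^K))) \<longlonglongrightarrow> 0 + 0"
      apply (intro tendsto_add tendsto_norm_zero)
      using l1 l2 by (simp_all add: c1_def c2_def a_def)
    then show ?thesis by (simp add: e_def[abs_def])
  qed
  define U where "U K = (\<Sum>k\<in>{N..<Suc K}. Theta a (Suc k))" for K
  have U0: "0 \<le> U K" for K unfolding U_def by (rule sum_nonneg) (simp add: Theta_nonneg)
  have aU: "\<alpha> \<le> U K + e K" if NK: "N \<le> K" for K
  proof -
    have b1: "cmod (c1 (2^N)) \<le> (\<Sum>k\<in>{N..<Suc K}. \<Sum>i\<in>{2^k..<2^Suc k}. cmod (c1 i - c1 (Suc i)))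
          + cmod ((\<Sum>j<(2::nat)^K. c1 (2^K + j)) / of_nat (2^K))"
      by (rule avg_bound[OF NK])
    have b2: "cmod (c2 (2^N)) \<le> (\<Sum>k\<in>{N..<Suc K}. \<Sum>i\<in>{2^k..<2^Suc k}. cmod (c2 i - c2 (Suc i)))
          + cmod ((\<Sum>j<(2::nat)^K. c2 (2^K + j)) / of_nat (2^K))"
      by (rule avg_bound[OF NK])
    have s: "(\<Sum>k\<in>{N..<Suc K}. \<Sum>i\<in>{2^k..<2^Suc k}. cmod (c1 i - c1 (Suc i)))
        + (\<Sum>k\<in>{N..<Suc K}. \<Sum>i\<in>{2^k..<2^Suc k}. cmod (c2 i - c2 (Suc i))) \<le> U K"
    proof -
      have "(\<Sum>k\<in>{N..<Suc K}. \<Sum>i\<in>{2^k..<2^Suc k}. cmod (c1 i - c1 (Suc i)))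
        + (\<Sum>k\<in>{N..<Suc K}. \<Sum>i\<in>{2^k..<2^Suc k}. cmod (c2 i - c2 (Suc i)))
        = (\<Sum>k\<in>{N..<Suc K}. (\<Sum>i\<in>{2^k..<2^Suc k}. cmod (c1 i - c1 (Suc i)))
             + (\<Sum>i\<in>{2^k..<2^Suc k}. cmod (c2 i - c2 (Suc i))))"
        by (simp only: sum.distrib)
      also have "\<dots> \<le> U K" unfolding U_def c1_def c2_def by (intro sum_mono Theta_lower)
      finally show ?thesis .
    qed
    have "cmod (c1 (2^N)) = cmod (a (2^N))" "cmod (c2 (2^N)) = cmod (a (-(2^N)))" by (simp_all add: c1_def c2_def)
    with b1 b2 s show ?thesis unfolding \<alpha>_def e_def by linarith
  qed
  have Ub: "r ^ Suc N * U K powr p \<le> r * Tail" if NK: "N \<le> K" for K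
  proof -
    have Us: "U K = (\<Sum>j<Suc K - N. Theta a (Suc (N + j)))"
      unfolding U_def by (subst sum.atLeastLessThan_shift_0) (simp add: atLeast0LessThan o_def)
    have "U K powr p \<le> (\<Sum>j<Suc K - N. (2 powr (p - 1)) ^ (j + 1) * Theta a (Suc (N + j)) powr p)"
      unfolding Us using p by (intro conv_sum) (auto simp: Theta_nonneg)
    hence "r ^ Suc N * U K powr p \<le> r ^ Suc N * (\<Sum>j<Suc K - N. r ^ (j + 1) * Theta a (Suc (N + j)) powr p)"
      using r0 unfolding r_def by (intro mult_left_mono) auto
    also have "\<dots> = r * (\<Sum>j<Suc K - N. t (j + Suc N))"
      unfolding t_def sum_distrib_left by (intro sum.cong refl) (simp add: power_add algebra_simps)
    also have "(\<Sum>j<Suc K - N. t (j + Suc N)) \<le> Tail"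
      unfolding Tail_def by (rule sum_le_suminf[OF summ']) (auto simp: t0)
    finally show ?thesis using r0 by (simp add: mult_left_mono)
  qed
  define \<gamma> where "\<gamma> K = max (\<alpha> - e K) 0" for K
  have \<gamma>U: "\<gamma> K \<le> U K" if "N \<le> K" for K using aU[OF that] U0[of K] by (simp add: \<gamma>_def)
  have \<gamma>lim: "\<gamma> \<longlonglongrightarrow> \<alpha>"
  proof -
    have "(\<lambda>K. max (\<alpha> - e K) 0) \<longlonglongrightarrow> max (\<alpha> - 0) 0"
      by (intro tendsto_max tendsto_diff tendsto_const e0)
    then show ?thesis using \<alpha>0 by (simp add: \<gamma>_def[abs_def])
  qed
  have main: "r ^ Suc N * \<alpha> powr p \<le> r * Tail"
  proof (cases "\<alpha> = 0")
    case True
    then show ?thesis using r0 Tail0 by simp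
  next
    case False
    have "(\<lambda>K. r ^ Suc N * \<gamma> K powr p) \<longlonglongrightarrow> r ^ Suc N * \<alpha> powr p"
      by (intro tendsto_mult tendsto_const tendsto_powr \<gamma>lim False)
    moreover have "\<exists>M. \<forall>K\<ge>M. r ^ Suc N * \<gamma> K powr p \<le> r * Tail"
    proof (intro exI allI impI)
      fix K assume NK: "N \<le> K"
      have "\<gamma> K powr p \<le> U K powr p"
        using \<gamma>U[OF NK] p by (intro powr_mono2) (auto simp: \<gamma>_def)
      hence "r ^ Suc N * \<gamma> K powr p \<le> r ^ Suc N * U K powr p"
        using r0 by (intro mult_left_mono) auto
      also have "\<dots> \<le> r * Tail" by (rule Ub[OF NK])
      finally show "r ^ Suc N * \<gamma> K powr p \<le> r * Tail" .
    qed
    ultimately show ?thesis by (rule LIMSEQ_le_const2)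
  qed
  then show ?thesis unfolding r_def Tail_def t_def \<alpha>_def a_def .
qed



theorem mainTheorem7:
  fixes f :: "real \<Rightarrow> complex" and p :: real and N :: nat
  assumes "set_integrable lborel {-pi..pi} f"
    and "1 < p"
  shows "Ip p (S_N N f) \<le> ereal (2 powr (1 / conj_exp p)) * Ip p f"
proof -
  note f = assms(1) and p = assms(2)
  define a where "a = fourier_coeff f"
  define b where "b = (\<lambda>k::int. if \<bar>k\<bar> \<le> 2 ^ N then a k else 0)"
  have fb: "fourier_coeff (S_N N f) = b" by (rule ext) (simp add: fc_SN a_def b_def)
  define r :: real where "r = 2 powr (p - 1)"
  have r0: "0 < r" by (simp add: r_def)
  have r1: "1 \<le> r" using p unfolding r_def by (simp add: ge_one_powr_ge_zero)
  define t where "t = (\<lambda>k::nat. (2 powr (real k / conj_exp p) * Theta a k) powr p)"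
  define tb where "tb = (\<lambda>k::nat. (2 powr (real k / conj_exp p) * Theta b k) powr p)"
  have t_eq: "t k = r ^ k * Theta a k powr p" for k
    unfolding t_def r_def by (rule tform[OF p Theta_nonneg])
  have t0: "0 \<le> t k" for k by (simp add: t_def)
  have Ipf: "Ip p f = (if summable t then ereal ((\<Sum>k. t k) powr (1/p)) else \<infinity>)"
    unfolding Ip_def Ip_seq_def t_def a_def Let_def by simp
  have Ipb: "Ip p (S_N N f) = (if summable tb then ereal ((\<Sum>k. tb k) powr (1/p)) else \<infinity>)"
    unfolding Ip_def Ip_seq_def tb_def fb Let_def by simp
  have c0: "0 < 2 powr (1 / conj_exp p)" by simp
  show ?thesis
  proof (cases "summable t")
    case False
    then show ?thesis unfolding Ipf using c0 by simp
  next
    case True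
    define \<alpha> where "\<alpha> = cmod (a (2^N)) + cmod (a (-(2^N)))"
    define Tail where "Tail = (\<Sum>j. t (j + Suc N))"
    have summ: "summable (\<lambda>k. (2 powr (p - 1)) ^ k * Theta (fourier_coeff f) k powr p)"
      using True unfolding t_eq r_def a_def .
    have key: "r ^ Suc N * \<alpha> powr p \<le> r * Tail"
      using key_bound[OF f p summ, of N] unfolding r_def Tail_def t_eq \<alpha>_def a_def .
    have tb_eq: "tb k = (if k \<le> N then t k else if k = Suc N then r ^ Suc N * \<alpha> powr p else 0)" for k
    proof -
      consider "k \<le> N" | "k = Suc N" | "Suc (Suc N) \<le> k" by linarith
      then show ?thesis
      proof cases
        case 1
        then show ?thesis unfolding tb_def t_def b_def using Theta_b_low[OF 1, of a] by simp
      next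
        case 2
        have "tb k = r ^ Suc N * Theta b (Suc N) powr p"
          unfolding tb_def r_def 2 by (rule tform[OF p Theta_nonneg])
        also have "Theta b (Suc N) = \<alpha>" unfolding b_def \<alpha>_def by (rule Theta_b_mid)
        finally show ?thesis using 2 by simp
      next
        case 3
        have "Theta b k = 0" unfolding b_def by (rule Theta_b_high[OF 3])
        then show ?thesis using 3 p by (simp add: tb_def)
      qed
    qed
    have tb_sums: "tb sums (\<Sum>k\<in>{..<Suc (Suc N)}. tb k)"
      by (rule sums_finite) (auto simp: tb_eq)
    have sumtb: "(\<Sum>k. tb k) = (\<Sum>k<Suc N. t k) + r ^ Suc N * \<alpha> powr p"
    proof -
      have "(\<Sum>k. tb k) = (\<Sum>k<Suc (Suc N). tb k)" using tb_sums by (rule sums_unique[symmetric])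
      also have "\<dots> = (\<Sum>k<Suc N. tb k) + tb (Suc N)" by simp
      also have "(\<Sum>k<Suc N. tb k) = (\<Sum>k<Suc N. t k)" by (intro sum.cong refl) (simp add: tb_eq)
      finally show ?thesis by (simp add: tb_eq)
    qed
    have sumt: "(\<Sum>k. t k) = Tail + (\<Sum>k<Suc N. t k)"
      unfolding Tail_def by (rule suminf_split_initial_segment[OF True])
    have head: "(\<Sum>k<Suc N. t k) \<le> r * (\<Sum>k<Suc N. t k)"
    proof -
      have X0: "0 \<le> (\<Sum>k<Suc N. t k)" by (simp add: sum_nonneg t0)
      show ?thesis using mult_right_mono[OF r1 X0] by simp
    qed
    have le: "(\<Sum>k. tb k) \<le> r * (\<Sum>k. t k)"
      unfolding sumtb sumt using key head by (simp add: distrib_left)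
    have S0: "0 \<le> (\<Sum>k. t k)" by (rule suminf_nonneg[OF True t0])
    have tb0: "0 \<le> (\<Sum>k. tb k)"
    proof -
      have "0 \<le> (\<Sum>k<Suc N. t k)" by (simp add: sum_nonneg t0)
      moreover have "0 \<le> r ^ Suc N * \<alpha> powr p" using r0 by simp
      ultimately show ?thesis unfolding sumtb by linarith
    qed
    have "(\<Sum>k. tb k) powr (1/p) \<le> (r * (\<Sum>k. t k)) powr (1/p)"
      using le tb0 p by (intro powr_mono2) auto
    also have "\<dots> = r powr (1/p) * (\<Sum>k. t k) powr (1/p)"
      using r0 S0 by (simp add: powr_mult)
    also have "r powr (1/p) = 2 powr (1 / conj_exp p)"
    proof -
      have "(p - 1) * (1 / p) = 1 / conj_exp p"
        using p unfolding conj_exp_def by (simp add: field_simps)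
      then show ?thesis unfolding r_def by (simp add: powr_powr)
    qed
    finally have fin: "(\<Sum>k. tb k) powr (1/p) \<le> 2 powr (1 / conj_exp p) * (\<Sum>k. t k) powr (1/p)" .
    have "summable tb" using tb_sums by (rule sums_summable)
    then show ?thesis unfolding Ipb Ipf using True fin by simp
  qed
qed


end
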